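(* Let $c_1,\dots,c_{n-1}$ be free generators of a free $\mathbb Z$-module, put $c_0=-(c_1+\dots+c_{n-1})$, and set $c_i=c_{i'}$ whenever $i\equiv i'\pmod n$ ($i\in\mathbb Z$). For $i,j\in\mathbb Z$ let $c_{i,j}=c_{i-1}+c_{i-2}+\dots+c_{j'}$, where $j'\le i$ is an integer with $j'\equiv j\pmod n$. This does not depend on the choice of $j'$ since $c_0+\dots+c_{n-1}=0$; the sum is empty, hence $0$, if $j'=i$. Let $i_1,\dots,i_n$ be integers. Then the following are equivalent: 1. modulo $n$, the set $\{i_1,\dots,i_n\}$ coincides with $\{1,\dots,n\}$; 2. $\sum_{m=1}^nc_{i_m}=0$; 3. $\sum_{m=1}^nc_{i_m,m}=0$.
   Context: $n\ge3$ is a fixed integer. *)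

theory Defs
  imports Main "HOL-Library.Function_Algebras"
begin

text \<open>The free Z-module on generators c_1,...,c_{n-1} is modelled concretely as the
finitely supported functions nat => int supported on {1..n-1}; the generator c_k
(1 <= k <= n-1) is the indicator function of k.\<close>

definition cgen :: "nat \<Rightarrow> int \<Rightarrow> (nat \<Rightarrow> int)" where
  "cgen n i =
     (let r = nat (i mod int n) in
      if r = 0 then (\<lambda>k. if 1 \<le> k \<and> k \<le> n - 1 then -1 else 0)
      else (\<lambda>k. if k = r then 1 else 0))"

text \<open>c_{i,j} = c_{i-1} + ... + c_{j'} with j' <= i, j' = j mod n; we take the
canonical choice j' = i - ((i - j) mod n) (the paper notes independence of the choice).\<close>

definition cseg :: "nat \<Rightarrow> int \<Rightarrow> int \<Rightarrow> (nat \<Rightarrow> int)" where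
  "cseg n i j = (\<Sum>k\<in>{i - ((i - j) mod int n)..<i}. cgen n k)"

end

theory Submission
  imports Defs
begin

lemma sum_fun_app: "(\<Sum>x\<in>S. f x) k = (\<Sum>x\<in>S. (f x k :: int))"
  by (induction S rule: infinite_finite_induct) auto

lemma cgen_apply:
  assumes "n \<ge> 1"
  shows "cgen n x k = (if 1 \<le> k \<and> k < n then (if x mod int n = int k then 1 else 0) - (if x mod int n = 0 then 1 else 0) else 0)"
proof -
  have r: "0 \<le> x mod int n" "x mod int n < int n" using assms by auto
  show ?thesis unfolding cgen_def Let_def using r by auto
qed

definition F :: "nat \<Rightarrow> int \<Rightarrow> int \<Rightarrow> int" where
  "F n q x = (if x mod int n = 0 \<or> q < x mod int n then 0 else -1)"

lemma F_mod: "F n q (x mod int n) = F n q x"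
  unfolding F_def by simp

lemma cgen_F:
  assumes "n \<ge> 3" "1 \<le> k" "k < n"
  shows "cgen n x k = F n (int k) (x+1) - F n (int k) x"
proof -
  define r where "r = x mod int n"
  have r: "0 \<le> r" "r < int n" using assms by (auto simp: r_def)
  have r1: "(x+1) mod int n = (if r + 1 = int n then 0 else r + 1)"
  proof -
    have "(x+1) mod int n = (r+1) mod int n" by (simp add: r_def mod_add_left_eq)
    also have "\<dots> = (if r + 1 = int n then 0 else r + 1)" using r by auto
    finally show ?thesis .
  qed
  have c: "cgen n x k = (if r = int k then 1 else 0) - (if r = 0 then 1 else 0)"
    using cgen_apply[of n x k] assms by (simp add: r_def)
  show ?thesis unfolding c F_def r1 r_def[symmetric]
    using assms r by auto
qed

lemma telescope_int:
  "(\<Sum>k\<in>{a..<a + int L}. (g (k+1) - g k :: int)) = g (a + int L) - g a"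
proof (induction L)
  case 0 then show ?case by simp
next
  case (Suc L)
  have "{a..<a + int (Suc L)} = insert (a + int L) {a..<a + int L}" by auto
  then show ?case using Suc by (simp add: algebra_simps)
qed

lemma cseg_F:
  assumes "n \<ge> 3" "1 \<le> k" "k < n"
  shows "cseg n a b k = F n (int k) a - F n (int k) b"
proof -
  define L where "L = (a - b) mod int n"
  have L: "0 \<le> L" using assms by (simp add: L_def)
  have "cseg n a b k = (\<Sum>t\<in>{a - L..<a}. cgen n t k)"
    unfolding cseg_def L_def by (simp add: sum_fun_app)
  also have "\<dots> = (\<Sum>t\<in>{(a - L)..<(a-L) + int (nat L)}. F n (int k) (t+1) - F n (int k) t)"
    using L cgen_F[OF assms] by simp
  also have "\<dots> = F n (int k) a - F n (int k) (a - L)"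
    by (subst telescope_int) (use L in simp)
  also have "F n (int k) (a - L) = F n (int k) b"
  proof -
    have "(a - L) mod int n = b mod int n" unfolding L_def by (simp add: mod_diff_right_eq)
    then show ?thesis by (metis F_mod)
  qed
  finally show ?thesis .
qed

lemma zero_or_pos: "(r::int) \<in> {0..<N} \<Longrightarrow> r = 0 \<or> r \<in> {1..<N}" by auto

lemma fun_eq0_iff: "(f :: nat \<Rightarrow> int) = 0 \<longleftrightarrow> (\<forall>k. f k = 0)"
  by (auto simp: fun_eq_iff)

theorem mainTheorem8:
  fixes n :: nat and i :: "nat \<Rightarrow> int"
  assumes "n \<ge> 3"
  shows "((\<lambda>x. x mod int n) ` (i ` {1..n}) = (\<lambda>x. x mod int n) ` {1..int n}
            \<longleftrightarrow> (\<Sum>m\<in>{1..n}. cgen n (i m)) = 0)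
       \<and> ((\<Sum>m\<in>{1..n}. cgen n (i m)) = 0
            \<longleftrightarrow> (\<Sum>m\<in>{1..n}. cseg n (i m) (int m)) = 0)"
proof -
  define N where "N = int n"
  have N3: "N \<ge> 3" using assms by (simp add: N_def)
  define A where "A r = (\<Sum>m\<in>{1..n}. if i m mod N = r then 1 else (0::int))" for r
  define P where "P = (\<forall>r\<in>{0..<N}. A r = 1)"
  have Ange: "A r \<ge> 0" for r unfolding A_def by (rule sum_nonneg) auto
  have Apos: "A r \<ge> 1 \<longleftrightarrow> (\<exists>m\<in>{1..n}. i m mod N = r)" for r
  proof
    assume "A r \<ge> 1"
    then have "A r \<noteq> 0" by simp
    show "\<exists>m\<in>{1..n}. i m mod N = r"
    proof (rule ccontr)
      assume "\<not> (\<exists>m\<in>{1..n}. i m mod N = r)"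
      then have "A r = 0" unfolding A_def by (intro sum.neutral) auto
      then show False using \<open>A r \<noteq> 0\<close> by simp
    qed
  next
    assume "\<exists>m\<in>{1..n}. i m mod N = r"
    then obtain m where m: "m \<in> {1..n}" "i m mod N = r" by blast
    have "1 = (if i m mod N = r then 1 else (0::int))" using m by simp
    also have "\<dots> \<le> A r" unfolding A_def
      by (rule member_le_sum) (use m in auto)
    finally show "A r \<ge> 1" .
  qed
  have Asum: "(\<Sum>r\<in>{0..<N}. A r) = N"
  proof -
    have "(\<Sum>r\<in>{0..<N}. A r) = (\<Sum>m\<in>{1..n}. \<Sum>r\<in>{0..<N}. if i m mod N = r then 1 else (0::int))"
      unfolding A_def by (rule sum.swap)
    also have "\<dots> = (\<Sum>m\<in>{1..n}. 1)"
    proof (rule sum.cong[OF refl])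
      fix m
      have "i m mod N \<in> {0..<N}" using N3 by auto
      then show "(\<Sum>r\<in>{0..<N}. if i m mod N = r then 1 else (0::int)) = 1"
        by (simp add: sum.delta)
    qed
    finally show ?thesis by (simp add: N_def)
  qed
  have img: "(\<lambda>x. x mod N) ` {1..N} = {0..<N}"
  proof
    show "(\<lambda>x. x mod N) ` {1..N} \<subseteq> {0..<N}" using N3 by auto
    show "{0..<N} \<subseteq> (\<lambda>x. x mod N) ` {1..N}"
    proof
      fix r assume r: "r \<in> {0..<N}"
      show "r \<in> (\<lambda>x. x mod N) ` {1..N}"
      proof (cases "r = 0")
        case True
        then show ?thesis using N3 by (intro image_eqI[of _ _ N]) auto
      next
        case False
        then show ?thesis using r by (intro image_eqI[of _ _ r]) auto
      qed
    qed
  qed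
  have C1: "((\<lambda>x. x mod int n) ` (i ` {1..n}) = (\<lambda>x. x mod int n) ` {1..int n})
        \<longleftrightarrow> (\<forall>r\<in>{0..<N}. A r \<ge> 1)"
  proof -
    have sub: "(\<lambda>x. x mod N) ` (i ` {1..n}) \<subseteq> {0..<N}" using N3 by auto
    have img': "(\<lambda>x. x mod int n) ` {1..int n} = {0..<N}" using img by (simp add: N_def)
    have "((\<lambda>x. x mod int n) ` (i ` {1..n}) = (\<lambda>x. x mod int n) ` {1..int n})
        \<longleftrightarrow> ((\<lambda>x. x mod N) ` (i ` {1..n}) = {0..<N})"
      unfolding img' by (simp add: N_def)
    also have "\<dots> \<longleftrightarrow> {0..<N} \<subseteq> (\<lambda>x. x mod N) ` (i ` {1..n})"
      by (metis sub subset_antisym equalityD2)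
    also have "\<dots> \<longleftrightarrow> (\<forall>r\<in>{0..<N}. A r \<ge> 1)"
      unfolding Apos subset_iff image_image by (simp add: image_iff) (auto simp: eq_commute[of _ "i _ mod N"])
    finally show ?thesis .
  qed
  have P1: "P \<longleftrightarrow> (\<forall>r\<in>{0..<N}. A r \<ge> 1)"
  proof
    assume "P" then show "\<forall>r\<in>{0..<N}. A r \<ge> 1" unfolding P_def by simp
  next
    assume h: "\<forall>r\<in>{0..<N}. A r \<ge> 1"
    have "(\<Sum>r\<in>{0..<N}. A r - 1) = 0" using Asum N3 by (simp add: sum_subtractf)
    then have "\<forall>r\<in>{0..<N}. A r - 1 = 0"
      using h by (subst sum_nonneg_eq_0_iff[symmetric]) (auto simp: add1_zle_eq[symmetric])
    then show P unfolding P_def by simp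
  qed
  have C2: "(\<Sum>m\<in>{1..n}. cgen n (i m)) = 0 \<longleftrightarrow> (\<forall>q\<in>{1..<N}. A q = A 0)"
  proof -
    have co: "(\<Sum>m\<in>{1..n}. cgen n (i m)) k = (if 1 \<le> k \<and> k < n then A (int k) - A 0 else 0)" for k
      unfolding sum_fun_app A_def using assms
      by (auto simp: cgen_apply N_def sum_subtractf)
    have "(\<Sum>m\<in>{1..n}. cgen n (i m)) = 0 \<longleftrightarrow> (\<forall>k. 1 \<le> k \<and> k < n \<longrightarrow> A (int k) = A 0)"
      unfolding fun_eq0_iff co by auto
    also have "\<dots> \<longleftrightarrow> (\<forall>q\<in>{1..<N}. A q = A 0)"
    proof safe
      fix q assume h: "\<forall>k. 1 \<le> k \<and> k < n \<longrightarrow> A (int k) = A 0" and q: "q \<in> {1..<N}"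
      then have "1 \<le> nat q \<and> nat q < n" unfolding N_def by auto
      then have "A (int (nat q)) = A 0" using h by blast
      then show "A q = A 0" using q by simp
    next
      fix k assume h: "\<forall>q\<in>{1..<N}. A q = A 0" "1 \<le> k" "k < n"
      then show "A (int k) = A 0" unfolding N_def by auto
    qed
    finally show ?thesis .
  qed
  have P2: "P \<longleftrightarrow> (\<forall>q\<in>{1..<N}. A q = A 0)"
  proof
    assume P then show "\<forall>q\<in>{1..<N}. A q = A 0" unfolding P_def using N3 by auto
  next
    assume h: "\<forall>q\<in>{1..<N}. A q = A 0"
    have "(\<Sum>r\<in>{0..<N}. A r) = (\<Sum>r\<in>{0..<N}. A 0)"
    proof (rule sum.cong[OF refl])
      fix x assume x: "x \<in> {0..<N}"
      show "A x = A 0"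
      proof (cases "x = 0")
        case False then have "x \<in> {1..<N}" using x by auto
        then show ?thesis using h by blast
      qed simp
    qed
    then have "N * A 0 = N" using Asum N3 by simp
    then have "A 0 = 1" using N3 by simp
    then show P unfolding P_def using h by (metis zero_or_pos)
  qed
  define S where "S q = (\<Sum>r\<in>{1..q}. A r)" for q
  have S0: "S 0 = 0" unfolding S_def by simp
  have Sstep: "S r = S (r - 1) + A r" if "r \<ge> 1" for r
  proof -
    have "{1..r} = insert r {1..r-1}" using that by auto
    then show ?thesis unfolding S_def by simp
  qed
  have Fsum1: "(\<Sum>m\<in>{1..n}. F n (int k) (int m)) = - int k" if k: "1 \<le> k" "k < n" for k
  proof -
    have "(\<Sum>m\<in>{1..n}. F n (int k) (int m)) = (\<Sum>m\<in>{1..n}. - (if m \<in> {..k} then 1 else 0))"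
    proof (rule sum.cong[OF refl])
      fix m assume m: "m \<in> {1..n}"
      show "F n (int k) (int m) = - (if m \<in> {..k} then 1 else 0)"
      proof (cases "m = n")
        case True then show ?thesis using k unfolding F_def by simp
      next
        case False then have "int m mod int n = int m" using m by simp
        then show ?thesis using k m unfolding F_def by auto
      qed
    qed
    also have "\<dots> = - (\<Sum>m\<in>{1..n}. if m \<in> {..k} then 1 else 0)"
      by (rule sum_negf)
    also have "(\<Sum>m\<in>{1..n}. if m \<in> {..k} then 1 else (0::int)) = (\<Sum>m\<in>{1..n} \<inter> {..k}. 1)"
      by (rule sum.inter_restrict[symmetric]) simp
    also have "{1..n} \<inter> {..k} = {1..k}" using k by auto
    finally show ?thesis by simp
  qed
  have Fsum2: "(\<Sum>m\<in>{1..n}. F n (int k) (i m)) = - S (int k)" if k: "1 \<le> k" "k < n" for k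
  proof -
    have "S (int k) = (\<Sum>m\<in>{1..n}. \<Sum>r\<in>{1..int k}. if i m mod N = r then 1 else (0::int))"
      unfolding S_def A_def by (rule sum.swap)
    also have "\<dots> = (\<Sum>m\<in>{1..n}. - F n (int k) (i m))"
    proof (rule sum.cong[OF refl])
      fix m
      have "0 \<le> i m mod N" using N3 by simp
      then show "(\<Sum>r\<in>{1..int k}. if i m mod N = r then 1 else (0::int)) = - F n (int k) (i m)"
        unfolding F_def N_def[symmetric] by (simp add: sum.delta)
    qed
    finally show ?thesis by (simp add: sum_negf)
  qed
  have C3: "(\<Sum>m\<in>{1..n}. cseg n (i m) (int m)) = 0 \<longleftrightarrow> (\<forall>q\<in>{1..<N}. S q = q)"
  proof -
    have co: "(\<Sum>m\<in>{1..n}. cseg n (i m) (int m)) k = (if 1 \<le> k \<and> k < n then int k - S (int k) else 0)" for k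
    proof (cases "1 \<le> k \<and> k < n")
      case True
      then have "(\<Sum>m\<in>{1..n}. cseg n (i m) (int m)) k = (\<Sum>m\<in>{1..n}. F n (int k) (i m) - F n (int k) (int m))"
        unfolding sum_fun_app using cseg_F[OF assms] by simp
      also have "\<dots> = int k - S (int k)" using True Fsum1 Fsum2 by (simp add: sum_subtractf)
      finally show ?thesis using True by simp
    next
      case False
      have "cseg n a b k = 0" for a b
        unfolding cseg_def sum_fun_app using False assms by (intro sum.neutral) (auto simp: cgen_apply)
      then show ?thesis unfolding sum_fun_app using False by auto
    qed
    have "(\<Sum>m\<in>{1..n}. cseg n (i m) (int m)) = 0 \<longleftrightarrow> (\<forall>k. 1 \<le> k \<and> k < n \<longrightarrow> S (int k) = int k)"
      unfolding fun_eq0_iff co by auto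
    also have "\<dots> \<longleftrightarrow> (\<forall>q\<in>{1..<N}. S q = q)"
    proof safe
      fix q assume h: "\<forall>k. 1 \<le> k \<and> k < n \<longrightarrow> S (int k) = int k" and q: "q \<in> {1..<N}"
      then have "1 \<le> nat q \<and> nat q < n" unfolding N_def by auto
      then have "S (int (nat q)) = int (nat q)" using h by blast
      then show "S q = q" using q by simp
    next
      fix k assume h: "\<forall>q\<in>{1..<N}. S q = q" "1 \<le> k" "k < n"
      then show "S (int k) = int k" unfolding N_def by auto
    qed
    finally show ?thesis .
  qed
  have P3: "P \<longleftrightarrow> (\<forall>q\<in>{1..<N}. S q = q)"
  proof
    assume P
    show "\<forall>q\<in>{1..<N}. S q = q"
    proof
      fix q assume q: "q \<in> {1..<N}"
      have "S q = (\<Sum>r\<in>{1..q}. 1)" unfolding S_def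
        by (rule sum.cong) (use \<open>P\<close> q in \<open>auto simp: P_def\<close>)
      then show "S q = q" using q by simp
    qed
  next
    assume h: "\<forall>q\<in>{1..<N}. S q = q"
    have Sm: "S (r - 1) = r - 1" if "r \<in> {1..<N}" for r
    proof (cases "r = 1")
      case True then show ?thesis using S0 by simp
    next
      case False then show ?thesis using h that by auto
    qed
    have a1: "A r = 1" if "r \<in> {1..<N}" for r
      using Sstep[of r] Sm[OF that] h that by auto
    have "{0..<N} = insert 0 {1..N-1}" using N3 by auto
    then have "N = A 0 + S (N - 1)" using Asum unfolding S_def by simp
    moreover have "S (N - 1) = N - 1" using h N3 by auto
    ultimately have "A 0 = 1" by simp
    then show P unfolding P_def using a1 by (metis zero_or_pos)
  qed
  have e1: "((\<lambda>x. x mod int n) ` (i ` {1..n}) = (\<lambda>x. x mod int n) ` {1..int n}) \<longleftrightarrow> P"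
    using C1 P1 by simp
  have e2: "(\<Sum>m\<in>{1..n}. cgen n (i m)) = 0 \<longleftrightarrow> P" using C2 P2 by simp
  have e3: "(\<Sum>m\<in>{1..n}. cseg n (i m) (int m)) = 0 \<longleftrightarrow> P" using C3 P3 by simp
  show ?thesis unfolding e1 e2 e3 by simp
qed

end
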